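(* Let $T=(V,E)$ be a finite rooted tree with nonnegative partial costs, $\Pr$ a probability distribution over a finite set of queries, and $k$ a positive integer with $k\le|V|$. Let $R_g$ be the output of the greedy algorithm that starts with $R=\emptyset$ and, while $|R|<k$, adds to $R$ a node $u\in V\setminus R$ maximizing $B(R\cup\{u\})-B(R)$. Then $$B(R_g)\ge\Big(1-\frac1e\Big)\max_{R\subseteq V,\ |R|\le k}B(R).$$
   Context: $T=(V,E)$ is a finite rooted tree; $T(u)$ is the set of nodes of the subtree rooted at $u$ (including $u$); $A(u)$ the set of proper ancestors of $u$. Each non-leaf node is associated with a variable of a finite set $X$; $\mathrm{vars}(u)$ is the set of variables of nodes of $T(u)$; each query $q$ determines $Z_q\subseteq X$. For $R\subseteq V$, $w\in V$: $I_q(w,R)=1$ iff $w\in R$, $\mathrm{vars}(w)\subseteq Z_q$, and no $x\in A(w)\cap R$ has $\mathrm{vars}(x)\subseteq Z_q$; else $0$; $\mathbb{E}[I(w,R)]=\sum_q\Pr(q)I_q(w,R)$. Each node $x$ has partial cost $c(x)\ge0$, total cost $C(w)=\sum_{x\in T(w)}c(x)$. Benefit: $B(R)=\sum_{w\in R}\mathbb{E}[I(w,R)]C(w)$. *)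

theory Defs
  imports Complex_Main
begin

text \<open>A finite rooted tree on the node set V, given by a parent map:
  par v = Some p means p is the parent of v (edge p -> v); the root has no parent.\<close>

definition tree_edges :: "('v \<Rightarrow> 'v option) \<Rightarrow> 'v set \<Rightarrow> ('v \<times> 'v) set" where
  "tree_edges par V = {(p, v). v \<in> V \<and> par v = Some p}"

definition rooted_tree :: "('v \<Rightarrow> 'v option) \<Rightarrow> 'v set \<Rightarrow> 'v \<Rightarrow> bool" where
  "rooted_tree par V r \<longleftrightarrow> finite V \<and> r \<in> V \<and> par r = None
     \<and> (\<forall>v \<in> V - {r}. \<exists>p \<in> V. par v = Some p)
     \<and> (\<forall>v \<in> V. (r, v) \<in> (tree_edges par V)\<^sup>*)"

definition subtree :: "('v \<Rightarrow> 'v option) \<Rightarrow> 'v set \<Rightarrow> 'v \<Rightarrow> 'v set" where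
  "subtree par V u = {w. (u, w) \<in> (tree_edges par V)\<^sup>*}"

definition ancestors :: "('v \<Rightarrow> 'v option) \<Rightarrow> 'v set \<Rightarrow> 'v \<Rightarrow> 'v set" where
  "ancestors par V u = {x. (x, u) \<in> (tree_edges par V)\<^sup>+}"

definition is_leaf :: "('v \<Rightarrow> 'v option) \<Rightarrow> 'v set \<Rightarrow> 'v \<Rightarrow> bool" where
  "is_leaf par V w \<longleftrightarrow> (\<nexists>c. (w, c) \<in> tree_edges par V)"

text \<open>vars(u): variables of the non-leaf nodes in T(u); lab w is the variable of the
  non-leaf node w (the value of lab on leaves is irrelevant).\<close>
definition vars :: "('v \<Rightarrow> 'v option) \<Rightarrow> 'v set \<Rightarrow> ('v \<Rightarrow> 'x) \<Rightarrow> 'v \<Rightarrow> 'x set" where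
  "vars par V lab u = lab ` {w \<in> subtree par V u. \<not> is_leaf par V w}"

definition I_q :: "('v \<Rightarrow> 'v option) \<Rightarrow> 'v set \<Rightarrow> ('v \<Rightarrow> 'x) \<Rightarrow> 'x set \<Rightarrow> 'v \<Rightarrow> 'v set \<Rightarrow> real" where
  "I_q par V lab Zq w R =
     (if w \<in> R \<and> vars par V lab w \<subseteq> Zq
         \<and> \<not> (\<exists>x \<in> ancestors par V w \<inter> R. vars par V lab x \<subseteq> Zq)
      then 1 else 0)"

definition EI :: "('v \<Rightarrow> 'v option) \<Rightarrow> 'v set \<Rightarrow> ('v \<Rightarrow> 'x) \<Rightarrow> 'q set \<Rightarrow> ('q \<Rightarrow> real)
     \<Rightarrow> ('q \<Rightarrow> 'x set) \<Rightarrow> 'v \<Rightarrow> 'v set \<Rightarrow> real" where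
  "EI par V lab Q Pr Z w R = (\<Sum>q\<in>Q. Pr q * I_q par V lab (Z q) w R)"

definition total_cost :: "('v \<Rightarrow> 'v option) \<Rightarrow> 'v set \<Rightarrow> ('v \<Rightarrow> real) \<Rightarrow> 'v \<Rightarrow> real" where
  "total_cost par V c w = (\<Sum>x\<in>subtree par V w. c x)"

definition benefit :: "('v \<Rightarrow> 'v option) \<Rightarrow> 'v set \<Rightarrow> ('v \<Rightarrow> 'x) \<Rightarrow> 'q set \<Rightarrow> ('q \<Rightarrow> real)
     \<Rightarrow> ('q \<Rightarrow> 'x set) \<Rightarrow> ('v \<Rightarrow> real) \<Rightarrow> 'v set \<Rightarrow> real" where
  "benefit par V lab Q Pr Z c R =
     (\<Sum>w\<in>R. EI par V lab Q Pr Z w R * total_cost par V c w)"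

text \<open>Possible states of the greedy algorithm for a set function f on ground set V with
  budget k (any tie-breaking): start with the empty set; while card R < k add a node
  u in V - R maximizing f (R \<union> {u}) - f R.\<close>
inductive greedy_state :: "('v set \<Rightarrow> real) \<Rightarrow> 'v set \<Rightarrow> nat \<Rightarrow> 'v set \<Rightarrow> bool"
  for f V k where
  init: "greedy_state f V k {}"
| step: "\<lbrakk> greedy_state f V k R; card R < k; u \<in> V - R;
           \<forall>u' \<in> V - R. f (R \<union> {u'}) - f R \<le> f (R \<union> {u}) - f R \<rbrakk>
         \<Longrightarrow> greedy_state f V k (R \<union> {u})"

definition greedy_output :: "('v set \<Rightarrow> real) \<Rightarrow> 'v set \<Rightarrow> nat \<Rightarrow> 'v set \<Rightarrow> bool" where
  "greedy_output f V k R \<longleftrightarrow> greedy_state f V k R \<and> \<not> card R < k"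

end

theory Submission imports Defs begin

lemma edge_fun: "(p,v) \<in> tree_edges par V \<Longrightarrow> (p',v) \<in> tree_edges par V \<Longrightarrow> p = p'"
  by (auto simp: tree_edges_def)

lemma chain_lem:
  assumes "(a,x) \<in> (tree_edges par V)\<^sup>*" "(b,x) \<in> (tree_edges par V)\<^sup>*"
  shows "(a,b) \<in> (tree_edges par V)\<^sup>* \<or> (b,a) \<in> (tree_edges par V)\<^sup>*"
  using assms
proof (induction arbitrary: b rule: rtrancl_induct)
  case base
  then show ?case by simp
next
  case (step y z)
  note IH = step.IH and hy = step.hyps
  from step.prems show ?case
  proof (cases rule: rtranclE)
    case base
    then show ?thesis using hy by auto
  next
    case (step y')
    then have "y' = y" using edge_fun hy(2) by metis
    then show ?thesis using step IH by auto
  qed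
qed

lemma in_V: "(w,x) \<in> (tree_edges par V)\<^sup>* \<Longrightarrow> w \<in> V \<Longrightarrow> x \<in> V"
  by (erule rtranclE) (auto simp: tree_edges_def)

lemma acyc_lem:
  assumes "par r = None" "(r,v) \<in> (tree_edges par V)\<^sup>*"
  shows "(v,v) \<notin> (tree_edges par V)\<^sup>+"
  using assms(2)
proof (induction rule: rtrancl_induct)
  case base
  show ?case
  proof
    assume "(r,r) \<in> (tree_edges par V)\<^sup>+"
    then obtain p where "(p,r) \<in> tree_edges par V" by (auto elim: tranclE)
    then show False using assms(1) by (auto simp: tree_edges_def)
  qed
next
  case (step y z)
  show ?case
  proof
    assume "(z,z) \<in> (tree_edges par V)\<^sup>+"
    then obtain p where p: "(z,p) \<in> (tree_edges par V)\<^sup>*" "(p,z) \<in> tree_edges par V"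
      using tranclD2 by metis
    then have "p = y" using edge_fun step.hyps(2) by metis
    then have "(y,y) \<in> (tree_edges par V)\<^sup>+" using p step.hyps(2)
      by (meson rtrancl_into_trancl2)
    then show False using step.IH by simp
  qed
qed

lemma top_exists:
  assumes tree: "rooted_tree par V r" and R: "R \<subseteq> V" "finite R"
    and w: "w \<in> R" "G w" "(w,x) \<in> (tree_edges par V)\<^sup>*"
  shows "\<exists>w'\<in>R. G w' \<and> (w',x) \<in> (tree_edges par V)\<^sup>* \<and>
           \<not> (\<exists>a \<in> ancestors par V w' \<inter> R. G a)"
proof -
  let ?E = "tree_edges par V"
  define S where "S = {w\<in>R. G w \<and> (w,x) \<in> ?E\<^sup>*}"
  define rel where "rel = {(a,b). a \<in> S \<and> b \<in> S \<and> (a,b) \<in> ?E\<^sup>+}"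
  have fS: "finite S" using R by (simp add: S_def)
  have relS: "rel \<subseteq> S \<times> S" by (auto simp: rel_def)
  then have frel: "finite rel" using fS finite_subset by blast
  have r1: "rel \<subseteq> ?E\<^sup>+" by (auto simp: rel_def)
  have r2: "rel\<^sup>+ \<subseteq> ?E\<^sup>+"
  proof -
    have "rel\<^sup>+ \<subseteq> (?E\<^sup>+)\<^sup>+" using r1 by (rule trancl_mono_subset)
    then show ?thesis by simp
  qed
  have r3: "rel\<^sup>+ \<subseteq> S \<times> S" using relS by (rule trancl_subset_Sigma)
  have nc: "(v,v) \<notin> ?E\<^sup>+" if "v \<in> S" for v
  proof -
    have "v \<in> R" using that unfolding S_def by simp
    then have "v \<in> V" using R by blast
    then have "(r,v) \<in> ?E\<^sup>*" using tree unfolding rooted_tree_def by blast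
    moreover have "par r = None" using tree unfolding rooted_tree_def by blast
    ultimately show ?thesis using acyc_lem by metis
  qed
  have "acyclic rel" unfolding acyclic_def
  proof
    fix v show "(v,v) \<notin> rel\<^sup>+"
    proof
      assume h: "(v,v) \<in> rel\<^sup>+"
      then have "v \<in> S" using r3 by blast
      moreover have "(v,v) \<in> ?E\<^sup>+" using h r2 by blast
      ultimately show False using nc by blast
    qed
  qed
  then have wfr: "wf rel" using frel finite_acyclic_wf by blast
  have wS: "w \<in> S" using w by (simp add: S_def)
  obtain z where z: "z \<in> S" "\<And>y. (y,z) \<in> rel \<Longrightarrow> y \<notin> S"
    using wfE_min[OF wfr wS] by blast
  have zR: "z \<in> R" "G z" "(z,x) \<in> ?E\<^sup>*" using z(1) by (simp_all add: S_def)
  show ?thesis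
  proof (intro bexI conjI)
    show "z \<in> R" "G z" "(z,x) \<in> ?E\<^sup>*" using zR by simp_all
    show "\<not> (\<exists>a \<in> ancestors par V z \<inter> R. G a)"
    proof
      assume "\<exists>a \<in> ancestors par V z \<inter> R. G a"
      then obtain a where a: "a \<in> R" "G a" "(a,z) \<in> ?E\<^sup>+" by (auto simp: ancestors_def)
      have "(a,x) \<in> ?E\<^sup>*" using a(3) zR(3) by (meson trancl_into_rtrancl rtrancl_trans)
      then have aS: "a \<in> S" using a by (simp add: S_def)
      then have "(a,z) \<in> rel" using z(1) a(3) by (simp add: rel_def)
      then show False using z(2) aS by blast
    qed
  qed
qed

lemma count_lem:
  assumes tree: "rooted_tree par V r" and R: "R \<subseteq> V" "finite R"
  shows "(\<Sum>w\<in>R. (if w \<in> R \<and> G w \<and> \<not> (\<exists>a \<in> ancestors par V w \<inter> R. G a) then 1 else 0)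
            * (if (w,x) \<in> (tree_edges par V)\<^sup>* then 1 else 0))
       = (if \<exists>w\<in>R. G w \<and> (w,x) \<in> (tree_edges par V)\<^sup>* then (1::real) else 0)"
proof -
  let ?E = "tree_edges par V"
  define T where "T = {w\<in>R. G w \<and> \<not> (\<exists>a \<in> ancestors par V w \<inter> R. G a) \<and> (w,x) \<in> ?E\<^sup>*}"
  have "(\<Sum>w\<in>R. (if w \<in> R \<and> G w \<and> \<not> (\<exists>a \<in> ancestors par V w \<inter> R. G a) then 1 else 0)
            * (if (w,x) \<in> ?E\<^sup>* then 1 else 0)) = (\<Sum>w\<in>R. if w \<in> T then (1::real) else 0)"
    by (rule sum.cong) (auto simp: T_def)
  also have "\<dots> = real (card T)"
    using R by (simp add: sum.If_cases T_def Int_def)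
  also have "card T = (if \<exists>w\<in>R. G w \<and> (w,x) \<in> ?E\<^sup>* then 1 else 0)"
  proof (cases "\<exists>w\<in>R. G w \<and> (w,x) \<in> ?E\<^sup>*")
    case True
    then obtain w where w: "w\<in>R" "G w" "(w,x) \<in> ?E\<^sup>*" by blast
    obtain t where t1: "t\<in>R" "G t" "(t,x) \<in> ?E\<^sup>*" "\<not> (\<exists>a \<in> ancestors par V t \<inter> R. G a)"
      using top_exists[OF tree R, of w G x] w by blast
    then have t: "t \<in> T" unfolding T_def by simp
    have "T = {t}"
    proof (intro equalityI subsetI)
      fix s assume s: "s \<in> T"
      then have s1: "s\<in>R" "G s" "(s,x) \<in> ?E\<^sup>*" "\<not> (\<exists>a \<in> ancestors par V s \<inter> R. G a)"
        unfolding T_def by simp_all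
      have "(s,t) \<in> ?E\<^sup>* \<or> (t,s) \<in> ?E\<^sup>*" using chain_lem[OF s1(3) t1(3)] .
      then show "s \<in> {t}"
      proof
        assume "(s,t) \<in> ?E\<^sup>*"
        then have st: "s = t \<or> (s,t) \<in> ?E\<^sup>+" by (metis rtranclD)
        have "(s,t) \<notin> ?E\<^sup>+"
        proof
          assume "(s,t) \<in> ?E\<^sup>+"
          then have "s \<in> ancestors par V t \<inter> R" using s1 by (simp add: ancestors_def)
          then show False using t1(4) s1(2) by blast
        qed
        with st show ?thesis by auto
      next
        assume "(t,s) \<in> ?E\<^sup>*"
        then have st: "s = t \<or> (t,s) \<in> ?E\<^sup>+" by (metis rtranclD)
        have "(t,s) \<notin> ?E\<^sup>+"
        proof
          assume "(t,s) \<in> ?E\<^sup>+"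
          then have "t \<in> ancestors par V s \<inter> R" using t1 by (simp add: ancestors_def)
          then show False using s1(4) t1(2) by blast
        qed
        with st show ?thesis by auto
      qed
    qed (use t in simp)
    then show ?thesis using True by simp
  next
    case False
    then have "T = {}" by (auto simp: T_def)
    then show ?thesis using False by simp
  qed
  finally show ?thesis by simp
qed

definition covf :: "('p \<Rightarrow> real) \<Rightarrow> 'p set \<Rightarrow> ('p \<Rightarrow> 'w \<Rightarrow> bool) \<Rightarrow> 'w set \<Rightarrow> real" where
  "covf wt A P R = (\<Sum>p\<in>A. wt p * (if \<exists>w\<in>R. P p w then 1 else 0))"

lemma covf_mono:
  assumes "\<forall>p\<in>A. wt p \<ge> 0" "R \<subseteq> S"
  shows "covf wt A P R \<le> covf wt A P S"
  unfolding covf_def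
  by (rule sum_mono) (use assms in \<open>auto intro: mult_left_mono\<close>)

lemma ind_sub:
  assumes "finite B"
  shows "(if \<exists>w\<in>R \<union> B. P w then 1 else 0) - (if \<exists>w\<in>R. P w then 1 else 0)
     \<le> (\<Sum>u\<in>B. (if \<exists>w\<in>R \<union> {u}. P w then 1 else 0) - (if \<exists>w\<in>R. P w then (1::real) else 0))"
proof (cases "\<exists>w\<in>R. P w")
  case True
  then show ?thesis by auto
next
  case False
  show ?thesis
  proof (cases "\<exists>u\<in>B. P u")
    case True
    then obtain u where u: "u \<in> B" "P u" by blast
    have "1 \<le> (\<Sum>u\<in>B. (if \<exists>w\<in>R \<union> {u}. P w then 1 else 0) - (if \<exists>w\<in>R. P w then (1::real) else 0))"
    proof -
      have "(1::real) = (if \<exists>w\<in>R \<union> {u}. P w then 1 else 0) - (if \<exists>w\<in>R. P w then (1::real) else 0)"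
        using u False by auto
      also have "\<dots> \<le> (\<Sum>u\<in>B. (if \<exists>w\<in>R \<union> {u}. P w then 1 else 0) - (if \<exists>w\<in>R. P w then (1::real) else 0))"
        by (rule member_le_sum) (use u assms False in auto)
      finally show ?thesis .
    qed
    then show ?thesis using False by auto
  next
    case False2: False
    then show ?thesis using False by (auto intro: sum_nonneg)
  qed
qed

lemma covf_sub:
  assumes "\<forall>p\<in>A. wt p \<ge> 0" "finite B"
  shows "covf wt A P (R \<union> B) \<le> covf wt A P R + (\<Sum>u\<in>B. covf wt A P (R \<union> {u}) - covf wt A P R)"
proof -
  have "covf wt A P (R \<union> B) - covf wt A P R
     = (\<Sum>p\<in>A. wt p * ((if \<exists>w\<in>R \<union> B. P p w then 1 else 0) - (if \<exists>w\<in>R. P p w then 1 else 0)))"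
    unfolding covf_def by (simp add: sum_subtractf right_diff_distrib)
  also have "\<dots> \<le> (\<Sum>p\<in>A. wt p * (\<Sum>u\<in>B. (if \<exists>w\<in>R \<union> {u}. P p w then 1 else 0) - (if \<exists>w\<in>R. P p w then 1 else 0)))"
    by (rule sum_mono, rule mult_left_mono[OF ind_sub[OF assms(2)]]) (use assms in auto)
  also have "\<dots> = (\<Sum>u\<in>B. covf wt A P (R \<union> {u}) - covf wt A P R)"
    unfolding covf_def by (simp add: sum_distrib_left sum_distrib_right sum_subtractf right_diff_distrib sum.swap[of _ A B] mult.left_commute)
  finally show ?thesis by simp
qed

lemma greedy_inv:
  fixes f :: "'v set \<Rightarrow> real"
  assumes fV: "finite V" and f0: "f {} = 0" and kpos: "0 < k"
    and sub: "\<And>R S. R \<subseteq> V \<Longrightarrow> S \<subseteq> V \<Longrightarrow> f S \<le> f R + (\<Sum>u\<in>S-R. f (R \<union> {u}) - f R)"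
    and mono: "\<And>R u. R \<subseteq> V \<Longrightarrow> u \<in> V \<Longrightarrow> f R \<le> f (R \<union> {u})"
    and S: "S \<subseteq> V" "card S \<le> k"
    and g: "greedy_state f V k R"
  shows "R \<subseteq> V \<and> card R \<le> k \<and> f S - f R \<le> (1 - 1 / real k) ^ card R * f S"
  using g
proof (induction rule: greedy_state.induct)
  case init
  then show ?case using f0 by simp
next
  case (step R u)
  have RV: "R \<subseteq> V" and IH: "f S - f R \<le> (1 - 1 / real k) ^ card R * f S" using step.IH by auto
  have fR: "finite R" using RV fV finite_subset by blast
  define d where "d = f (R \<union> {u}) - f R"
  have d0: "0 \<le> d" using mono[OF RV] step.hyps(3) by (auto simp: d_def)
  have "(\<Sum>u'\<in>S-R. f (R \<union> {u'}) - f R) \<le> (\<Sum>u'\<in>S-R. d)"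
    by (rule sum_mono) (use step.hyps(4) S in \<open>auto simp: d_def\<close>)
  also have "\<dots> = real (card (S - R)) * d" by simp
  also have "\<dots> \<le> real k * d"
  proof -
    have "card (S - R) \<le> card S" using S fV by (meson card_mono finite_subset Diff_subset)
    then show ?thesis using S d0 by (intro mult_right_mono) auto
  qed
  finally have D: "f S - f R \<le> real k * d" using sub[OF RV S(1)] by linarith
  have "(f S - f R) / real k \<le> d" using D kpos by (simp add: divide_le_eq mult.commute)
  then have "f S - f (R \<union> {u}) \<le> (1 - 1 / real k) * (f S - f R)"
    by (simp add: d_def algebra_simps diff_divide_distrib)
  also have "\<dots> \<le> (1 - 1 / real k) * ((1 - 1 / real k) ^ card R * f S)"
    by (rule mult_left_mono[OF IH]) (use kpos in auto)
  also have "\<dots> = (1 - 1 / real k) ^ card (R \<union> {u}) * f S"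
    using step.hyps(3) fR by simp
  finally show ?case using step.hyps RV fR by auto
qed

lemma exp_bound:
  assumes "0 < k"
  shows "(1 - 1 / real k) ^ k \<le> exp (-1)"
proof -
  have "1 - 1 / real k \<le> exp (- (1 / real k))" using exp_ge_add_one_self[of "- (1 / real k)"] by simp
  then have "(1 - 1 / real k) ^ k \<le> exp (- (1 / real k)) ^ k"
    by (rule power_mono) (use assms in auto)
  also have "\<dots> = exp (- 1)" using assms by (simp add: exp_of_nat_mult[symmetric])
  finally show ?thesis .
qed

lemma benefit_covf:
  assumes tree: "rooted_tree par V r" and R: "R \<subseteq> V"
  shows "benefit par V lab Q Pr Z c R =
    covf (\<lambda>(q,x). Pr q * c x) (Q \<times> V)
      (\<lambda>(q,x) w. vars par V lab w \<subseteq> Z q \<and> (w,x) \<in> (tree_edges par V)\<^sup>*) R"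
proof -
  let ?E = "tree_edges par V"
  have fV: "finite V" using tree by (simp add: rooted_tree_def)
  have fR: "finite R" using R fV finite_subset by blast
  let ?I = "\<lambda>q w. I_q par V lab (Z q) w R"
  let ?ind = "\<lambda>w x. (if (w,x) \<in> ?E\<^sup>* then 1 else 0::real)"
  have tc: "total_cost par V c w = (\<Sum>x\<in>V. c x * ?ind w x)" if "w \<in> V" for w
  proof -
    have "subtree par V w = {x\<in>V. (w,x) \<in> ?E\<^sup>*}"
      using in_V[OF _ that] by (auto simp: subtree_def)
    then show ?thesis unfolding total_cost_def using fV
      by (simp add: sum.inter_filter[symmetric] if_distrib cong: if_cong)
  qed
  have "benefit par V lab Q Pr Z c R = (\<Sum>w\<in>R. \<Sum>q\<in>Q. \<Sum>x\<in>V. Pr q * c x * (?I q w * ?ind w x))"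
    unfolding benefit_def EI_def
  proof (rule sum.cong[OF refl])
    fix w assume "w \<in> R"
    then have "total_cost par V c w = (\<Sum>x\<in>V. c x * ?ind w x)" using tc R by blast
    then have "(\<Sum>q\<in>Q. Pr q * ?I q w) * total_cost par V c w
        = (\<Sum>q\<in>Q. \<Sum>x\<in>V. (Pr q * ?I q w) * (c x * ?ind w x))"
      by (simp only: sum_product)
    also have "\<dots> = (\<Sum>q\<in>Q. \<Sum>x\<in>V. Pr q * c x * (?I q w * ?ind w x))"
      by (intro sum.cong refl) (simp only: mult_ac)
    finally show "(\<Sum>q\<in>Q. Pr q * ?I q w) * total_cost par V c w
        = (\<Sum>q\<in>Q. \<Sum>x\<in>V. Pr q * c x * (?I q w * ?ind w x))" .
  qed
  also have "\<dots> = (\<Sum>q\<in>Q. \<Sum>w\<in>R. \<Sum>x\<in>V. Pr q * c x * (?I q w * ?ind w x))"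
    by (rule sum.swap)
  also have "\<dots> = (\<Sum>q\<in>Q. \<Sum>x\<in>V. \<Sum>w\<in>R. Pr q * c x * (?I q w * ?ind w x))"
    by (intro sum.cong refl sum.swap)
  also have "\<dots> = (\<Sum>q\<in>Q. \<Sum>x\<in>V. Pr q * c x * (\<Sum>w\<in>R. ?I q w * ?ind w x))"
    by (simp only: sum_distrib_left)
  also have "\<dots> = (\<Sum>q\<in>Q. \<Sum>x\<in>V. Pr q * c x *
      (if \<exists>w\<in>R. vars par V lab w \<subseteq> Z q \<and> (w,x) \<in> ?E\<^sup>* then 1 else 0))"
  proof (intro sum.cong refl)
    fix q x
    show "Pr q * c x * (\<Sum>w\<in>R. ?I q w * ?ind w x) = Pr q * c x *
      (if \<exists>w\<in>R. vars par V lab w \<subseteq> Z q \<and> (w,x) \<in> ?E\<^sup>* then 1 else 0)"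
      unfolding I_q_def using count_lem[OF tree R fR, of "\<lambda>w. vars par V lab w \<subseteq> Z q" x]
      by (simp only:)
  qed
  also have "\<dots> = covf (\<lambda>(q,x). Pr q * c x) (Q \<times> V)
      (\<lambda>(q,x) w. vars par V lab w \<subseteq> Z q \<and> (w,x) \<in> ?E\<^sup>*) R"
    unfolding covf_def sum.cartesian_product by (rule sum.cong) auto
  finally show ?thesis .
qed

theorem theorem3:
  fixes par :: "'v \<Rightarrow> 'v option" and V :: "'v set" and r :: 'v
    and X :: "'x set" and lab :: "'v \<Rightarrow> 'x"
    and Q :: "'q set" and Pr :: "'q \<Rightarrow> real" and Z :: "'q \<Rightarrow> 'x set"
    and c :: "'v \<Rightarrow> real" and k :: nat and Rg :: "'v set"
  assumes tree: "rooted_tree par V r"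
    and X_fin: "finite X"
    and lab_X: "\<forall>w \<in> V. \<not> is_leaf par V w \<longrightarrow> lab w \<in> X"
    and Z_X: "\<forall>q \<in> Q. Z q \<subseteq> X"
    and Q_fin: "finite Q"
    and Pr_nonneg: "\<forall>q \<in> Q. Pr q \<ge> 0"
    and Pr_sum: "(\<Sum>q\<in>Q. Pr q) = 1"
    and c_nonneg: "\<forall>x \<in> V. c x \<ge> 0"
    and k_pos: "0 < k" and k_le: "k \<le> card V"
    and greedy: "greedy_output (benefit par V lab Q Pr Z c) V k Rg"
  shows "benefit par V lab Q Pr Z c Rg \<ge>
           (1 - 1 / exp 1) * Max {benefit par V lab Q Pr Z c R | R. R \<subseteq> V \<and> card R \<le> k}"
proof -
  let ?f = "benefit par V lab Q Pr Z c"
  let ?wt = "\<lambda>(q,x). Pr q * c x"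
  let ?A = "Q \<times> V"
  let ?P = "\<lambda>(q,x) w. vars par V lab w \<subseteq> Z q \<and> (w,x) \<in> (tree_edges par V)\<^sup>*"
  have fV: "finite V" using tree by (simp add: rooted_tree_def)
  have wt: "\<forall>p\<in>?A. ?wt p \<ge> 0" using Pr_nonneg c_nonneg by auto
  have eq: "\<And>R. R \<subseteq> V \<Longrightarrow> ?f R = covf ?wt ?A ?P R" using benefit_covf[OF tree] by blast
  have f0: "?f {} = 0" by (simp add: benefit_def)
  have sub: "?f S \<le> ?f R + (\<Sum>u\<in>S-R. ?f (R \<union> {u}) - ?f R)" if "R \<subseteq> V" "S \<subseteq> V" for R S
  proof -
    have fB: "finite (S - R)" using that fV finite_subset by blast
    have "?f S \<le> covf ?wt ?A ?P (R \<union> (S - R))" using eq[OF that(2)] covf_mono[OF wt, of S "R \<union> (S - R)" ?P] by auto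
    also have "\<dots> \<le> covf ?wt ?A ?P R + (\<Sum>u\<in>S-R. covf ?wt ?A ?P (R \<union> {u}) - covf ?wt ?A ?P R)"
      by (rule covf_sub[OF wt fB])
    also have "\<dots> = ?f R + (\<Sum>u\<in>S-R. ?f (R \<union> {u}) - ?f R)"
      using eq that by (auto intro!: sum.cong)
    finally show ?thesis .
  qed
  have mono: "?f R \<le> ?f (R \<union> {u})" if "R \<subseteq> V" "u \<in> V" for R u
    using eq[OF that(1)] eq[of "R \<union> {u}"] that covf_mono[OF wt, of R "R \<union> {u}" ?P] by auto
  define M where "M = {?f R | R. R \<subseteq> V \<and> card R \<le> k}"
  have "M = ?f ` {R. R \<subseteq> V \<and> card R \<le> k}" by (auto simp: M_def)
  then have fM: "finite M" using fV by simp
  have "?f {} \<in> M" by (auto simp: M_def)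
  then have "Max M \<in> M" using fM Max_in by blast
  then obtain S where S: "S \<subseteq> V" "card S \<le> k" "Max M = ?f S" by (auto simp: M_def)
  have fS0: "0 \<le> ?f S" using eq[OF S(1)] wt unfolding covf_def
    by (auto intro!: sum_nonneg)
  have gs: "greedy_state ?f V k Rg" and ck: "\<not> card Rg < k" using greedy by (auto simp: greedy_output_def)
  have inv: "Rg \<subseteq> V \<and> card Rg \<le> k \<and> ?f S - ?f Rg \<le> (1 - 1 / real k) ^ card Rg * ?f S"
    by (rule greedy_inv[OF fV f0 k_pos sub mono S(1,2) gs])
  then have "card Rg = k" using ck by auto
  then have "?f S - ?f Rg \<le> (1 - 1 / real k) ^ k * ?f S" using inv by simp
  also have "\<dots> \<le> exp (-1) * ?f S" by (rule mult_right_mono[OF exp_bound[OF k_pos] fS0])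
  finally have "?f S - ?f Rg \<le> exp (-1) * ?f S" .
  moreover have "exp (-1) = 1 / exp (1::real)" by (simp add: exp_minus field_simps)
  ultimately show ?thesis unfolding M_def[symmetric] S(3) by (simp add: algebra_simps)
qed

end
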